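(* Let $\{c_n\}_{n\ge1}$ be a real sequence with $\sum_{n=1}^\infty |c_n|<+\infty$, such that $\sum_{n=N}^{\infty}(c_n)^2>0$ and $\sum_{n=N}^\infty c_n\neq 0$ for every $N\ge1$. Let $f(x):=\sum_{n=1}^\infty c_n\varphi^{(n)}(x)$ and $f_N(x):=\sum_{n=1}^{N-1}c_n\varphi^{(n)}(x)$ for $x\in[0,1]$, $N=1,2,\dots$. Then $$\lim_{N\to\infty}\int_0^1\left(\frac{f(x)-f_N(x)}{\frac12\sum_{n=N}^\infty c_n}-1\right)^2dx=0$$ holds if and only if $$\lim_{N\to\infty}\frac{\sum_{n=N}^\infty (c_n)^2}{\left(\sum_{n=N}^\infty c_n\right)^2}=0.$$ Moreover, under this last condition, for every $\varepsilon>0$, $$\lim_{N\to\infty}P\left(\left\{x\in[0,1]: 1-\varepsilon\le \frac{f(x)-f_N(x)}{\frac12\sum_{n=N}^\infty c_n}\le 1+\varepsilon\right\}\right)=1.$$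
   Context: The tent map on $[0,1]$ is $\varphi(x)=2x$ for $x\in[0,1/2]$ and $\varphi(x)=2(1-x)$ for $x\in[1/2,1]$; it is extended to $\mathbb{R}$ by $\varphi(x):=\varphi(x-[x])$ (period 1), and $\varphi^{(n)}$ denotes the $n$-fold iterate of $\varphi$, so that $\varphi^{(n)}(x)=\varphi(2^{n-1}x)$. $P$ denotes Lebesgue measure on $[0,1]$ (with the Borel $\sigma$-field), viewed as a probability space. *)

theory Defs
  imports "HOL-Analysis.Analysis"
begin

definition tent :: "real \<Rightarrow> real" where
  "tent x = (let y = frac x in if y \<le> 1/2 then 2 * y else 2 * (1 - y))"

definition tent_iter :: "nat \<Rightarrow> real \<Rightarrow> real" where
  "tent_iter n = (tent ^^ n)"

end

theory Submission
  imports Defs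
begin


lemma tent_bounds: "0 \<le> tent x \<and> tent x \<le> 1"
  unfolding tent_def Let_def using frac_lt_1[of x] frac_ge_0[of x] by auto

lemma tent_iter_bounds: "n \<ge> 1 \<Longrightarrow> 0 \<le> tent_iter n x \<and> tent_iter n x \<le> 1"
proof (induction n)
  case 0 then show ?case by simp
next
  case (Suc n) then show ?case unfolding tent_iter_def by (simp add: tent_bounds)
qed

lemma tent_iter_bounds01: "x \<in> {0..1} \<Longrightarrow> 0 \<le> tent_iter n x \<and> tent_iter n x \<le> 1"
  by (cases n) (simp_all add: tent_iter_def tent_bounds)

lemma tent_meas[measurable]: "tent \<in> borel_measurable borel"
proof -
  have "tent = (\<lambda>x. if x - real_of_int \<lfloor>x\<rfloor> \<le> 1/2 then 2 * (x - real_of_int \<lfloor>x\<rfloor>)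
     else 2 * (1 - (x - real_of_int \<lfloor>x\<rfloor>)))"
    by (auto simp: tent_def frac_def fun_eq_iff Let_def)
  also have "\<dots> \<in> borel_measurable borel" by measurable
  finally show ?thesis .
qed

lemma tent_iter_meas[measurable]: "tent_iter n \<in> borel_measurable borel"
proof (induction n)
  case 0 then show ?case by (simp add: tent_iter_def)
next
  case (Suc n) 
  have "tent_iter (Suc n) = (\<lambda>x. tent (tent_iter n x))" by (simp add: tent_iter_def fun_eq_iff)
  then show ?case using Suc by simp
qed

lemma tent_01: "x \<in> {0..1} \<Longrightarrow> tent x = (if x \<le> 1/2 then 2*x else 2 - 2*x)"
proof -
  assume x: "x \<in> {0..1}"
  show ?thesis
  proof (cases "x = 1")
    case True then show ?thesis by (simp add: tent_def)
  next
    case False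
    then have "frac x = x" using x by (simp add: frac_eq)
    then show ?thesis by (simp add: tent_def)
  qed
qed

lemma tent_sym: "x \<in> {0..1} \<Longrightarrow> tent (1 - x) = tent x"
  using tent_01[of x] tent_01[of "1-x"] by auto

lemma tent_iter_sym: "x \<in> {0..1} \<Longrightarrow> k \<ge> 1 \<Longrightarrow> tent_iter k (1 - x) = tent_iter k x"
proof -
  assume "x \<in> {0..1}" "k \<ge> 1"
  then obtain j where k: "k = Suc j" by (cases k) auto
  show ?thesis unfolding tent_iter_def k funpow_Suc_right using \<open>x \<in> {0..1}\<close> tent_sym by simp
qed

lemma tent_iter_add: "tent_iter (m + n) x = tent_iter n (tent_iter m x)"
  unfolding tent_iter_def by (metis add.commute funpow_add comp_apply)

lemma reflect01:
  fixes h :: "real \<Rightarrow> real"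
  assumes "(h has_integral I) {0..1}"
  shows "((\<lambda>x. h (1 - x)) has_integral I) {0..1}"
proof -
  have "((\<lambda>x. h (- x)) has_integral I) {-1..-0}"
    using assms has_integral_reflect_real by blast
  from has_integral_affinity'[OF this[unfolded cbox_interval[symmetric]], of 1 "-1"]
  show ?thesis by (simp add: cbox_interval)
qed

lemma invariance:
  fixes h :: "real \<Rightarrow> real"
  assumes h: "(h has_integral I) {0..1}"
  shows "((\<lambda>x. h (tent x)) has_integral I) {0..1}"
proof -
  have a: "((\<lambda>x. h (2 * x)) has_integral I / 2) {0..1/2}"
    using has_integral_affinity'[OF h[unfolded cbox_interval[symmetric]], of 2 0]
    by (simp add: cbox_interval)
  have k: "((\<lambda>x. h (1 - x)) has_integral I) {0..1}" using reflect01[OF h] .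
  have b: "((\<lambda>x. h (2 - 2 * x)) has_integral I / 2) {1/2..1}"
    using has_integral_affinity'[OF k[unfolded cbox_interval[symmetric]], of 2 "-1"]
    by (simp add: cbox_interval algebra_simps)
  have a': "((\<lambda>x. h (tent x)) has_integral I / 2) {0..1/2}"
    by (rule has_integral_eq[OF _ a]) (simp add: tent_01)
  have b': "((\<lambda>x. h (tent x)) has_integral I / 2) {1/2..1}"
    by (rule has_integral_eq[OF _ b]) (auto simp: tent_01 intro: arg_cong[where f=h])
  show ?thesis using has_integral_combine[OF _ _ a' b'] by simp
qed

lemma invariance_iter:
  fixes h :: "real \<Rightarrow> real"
  assumes "(h has_integral I) {0..1}"
  shows "((\<lambda>x. h (tent_iter n x)) has_integral I) {0..1}"
  using assms
proof (induction n arbitrary: h)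
  case 0 then show ?case by (simp add: tent_iter_def)
next
  case (Suc n)
  have "((\<lambda>x. h (tent x)) has_integral I) {0..1}" using invariance[OF Suc.prems] .
  from Suc.IH[OF this] show ?case by (simp add: tent_iter_def)
qed

abbreviation "L01 \<equiv> lebesgue_on {0..1::real}"

lemma finite_L01: "finite_measure L01"
  by (rule finite_measure_lebesgue_on) auto

lemma meas_L01: "(f::real\<Rightarrow>real) \<in> borel_measurable borel \<Longrightarrow> f \<in> borel_measurable L01"
  by (simp add: measurable_completion measurable_restrict_space1)

lemma integrable_L01:
  fixes f :: "real \<Rightarrow> real"
  assumes "f \<in> borel_measurable L01" "\<And>x. x \<in> {0..1} \<Longrightarrow> \<bar>f x\<bar> \<le> B"
  shows "integrable L01 f"
  by (rule finite_measure.integrable_const_bound[OF finite_L01, of _ B]) (use assms in auto)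

lemma bridge:
  fixes f :: "real \<Rightarrow> real"
  assumes "f \<in> borel_measurable L01" "\<And>x. x \<in> {0..1} \<Longrightarrow> \<bar>f x\<bar> \<le> B"
  shows "(f has_integral integral\<^sup>L L01 f) {0..1}"
  by (rule has_integral_integral_lebesgue_on[OF integrable_L01[OF assms]]) auto

lemma x2_int: "((\<lambda>x::real. x * x) has_integral 1/3) {0..1}"
proof -
  have "((\<lambda>x::real. x * x) has_integral ((\<lambda>x. x^3/3) 1 - (\<lambda>x. x^3/3) 0)) {0..1}"
    by (rule fundamental_theorem_of_calculus)
       (auto simp flip: has_real_derivative_iff_has_vector_derivative intro!: derivative_eq_intros simp: power2_eq_square)
  then show ?thesis by simp
qed

lemma x_int: "((\<lambda>x::real. x) has_integral 1/2) {0..1}"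
  using ident_has_integral[of 0 "1::real"] by simp

lemma J_int:
  assumes "k \<ge> 1"
  shows "((\<lambda>x. x * tent_iter k x) has_integral 1/4) {0..1}"
proof -
  define J where "J = integral\<^sup>L L01 (\<lambda>x. x * tent_iter k x)"
  have J: "((\<lambda>x. x * tent_iter k x) has_integral J) {0..1}"
    unfolding J_def
    by (rule bridge[of _ 1]) (auto intro!: meas_L01 simp: abs_mult tent_iter_bounds01 mult_le_one)
  have "((\<lambda>x. (1 - x) * tent_iter k (1 - x)) has_integral J) {0..1}"
    using reflect01[OF J] by simp
  then have J2: "((\<lambda>x. (1 - x) * tent_iter k x) has_integral J) {0..1}"
    by (rule has_integral_eq[rotated]) (use tent_iter_sym assms in auto)
  have "((\<lambda>x. x * tent_iter k x + (1 - x) * tent_iter k x) has_integral J + J) {0..1}"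
    by (rule has_integral_add[OF J J2])
  then have "((\<lambda>x. tent_iter k x) has_integral 2 * J) {0..1}"
    by (simp add: algebra_simps)
  moreover have "((\<lambda>x. tent_iter k x) has_integral 1/2) {0..1}"
    using invariance_iter[OF x_int, of k] by simp
  ultimately have "2 * J = 1/2" using has_integral_unique by blast
  then have "J = 1/4" by simp
  with J show ?thesis by simp
qed

lemma L01_eq:
  fixes f :: "real \<Rightarrow> real"
  assumes "f \<in> borel_measurable borel" "\<And>x. x \<in> {0..1} \<Longrightarrow> \<bar>f x\<bar> \<le> B"
    "(f has_integral I) {0..1}"
  shows "integral\<^sup>L L01 f = I"
  using bridge[OF meas_L01[OF assms(1)] assms(2)] assms(3) has_integral_unique by blast

lemma mom1: "integral\<^sup>L L01 (\<lambda>x. tent_iter n x) = 1/2"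
  by (rule L01_eq[of _ 1]) (auto simp: tent_iter_bounds01 intro: invariance_iter[OF x_int, simplified])

lemma mom2_le:
  assumes "m \<le> n"
  shows "integral\<^sup>L L01 (\<lambda>x. tent_iter m x * tent_iter n x) = (if m = n then 1/3 else 1/4)"
proof (rule L01_eq[of _ 1])
  show "(\<lambda>x. tent_iter m x * tent_iter n x) \<in> borel_measurable borel" by measurable
  show "\<bar>tent_iter m x * tent_iter n x\<bar> \<le> 1" if "x \<in> {0..1}" for x
    using tent_iter_bounds01[OF that, of m] tent_iter_bounds01[OF that, of n]
    by (simp add: abs_mult mult_le_one)
  show "((\<lambda>x. tent_iter m x * tent_iter n x) has_integral (if m = n then 1/3 else 1/4)) {0..1}"
  proof (cases "m = n")
    case True
    then show ?thesis using invariance_iter[OF x2_int, of n] by simp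
  next
    case False
    define k where "k = n - m"
    have k: "k \<ge> 1" "n = m + k" using assms False by (auto simp: k_def)
    from invariance_iter[OF J_int[OF k(1)], of m]
    show ?thesis using False by (simp add: k(2) tent_iter_add)
  qed
qed

lemma mom2: "integral\<^sup>L L01 (\<lambda>x. tent_iter m x * tent_iter n x) = (if m = n then 1/3 else 1/4)"
proof (cases "m \<le> n")
  case True then show ?thesis by (rule mom2_le)
next
  case False
  then have "integral\<^sup>L L01 (\<lambda>x. tent_iter n x * tent_iter m x) = (if n = m then 1/3 else 1/4)"
    by (intro mom2_le) auto
  then show ?thesis by (simp add: mult.commute eq_commute)
qed



lemma abs_le_sum_abs:
  fixes d :: "nat \<Rightarrow> real"
  assumes "summable (\<lambda>n. \<bar>d n\<bar>)"
  shows "\<bar>d n\<bar> \<le> (\<Sum>n. \<bar>d n\<bar>)"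
proof -
  have "\<bar>d n\<bar> \<le> (\<Sum>i\<in>{n}. \<bar>d i\<bar>)" by simp
  also have "\<dots> \<le> (\<Sum>n. \<bar>d n\<bar>)" by (rule sum_le_suminf[OF assms]) auto
  finally show ?thesis .
qed

lemma measure_L01: "measure L01 {0..1} = 1"
  by (subst measure_restrict_space) auto

lemma int_const_L01: "integral\<^sup>L L01 (\<lambda>x. a) = (a::real)"
  using measure_L01 by (simp add: lebesgue_integral_const)

lemma series_moments:
  fixes d :: "nat \<Rightarrow> real" and \<psi> :: "nat \<Rightarrow> real \<Rightarrow> real" and g :: "real \<Rightarrow> real"
  assumes sd: "summable (\<lambda>n. \<bar>d n\<bar>)"
    and meas: "\<And>n. \<psi> n \<in> borel_measurable borel"
    and bnd0: "\<And>n x. 0 \<le> \<psi> n x \<and> \<psi> n x \<le> 1"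
    and m1: "\<And>n. integral\<^sup>L L01 (\<psi> n) = 1/2"
    and m2: "\<And>m n. integral\<^sup>L L01 (\<lambda>x. \<psi> m x * \<psi> n x) = (if m = n then 1/3 else 1/4)"
    and g: "\<And>x. g x = (\<Sum>n. d n * \<psi> n x)"
  shows "integrable L01 g" "integral\<^sup>L L01 g = (\<Sum>n. d n) / 2"
    "integrable L01 (\<lambda>x. (g x)\<^sup>2)"
    "integral\<^sup>L L01 (\<lambda>x. (g x)\<^sup>2) = (\<Sum>n. d n)\<^sup>2 / 4 + (\<Sum>n. (d n)\<^sup>2) / 12"
proof -
  have bnd: "\<And>n x. x \<in> {0..1} \<Longrightarrow> 0 \<le> \<psi> n x \<and> \<psi> n x \<le> 1" using bnd0 by auto
  define M where "M = (\<Sum>n. \<bar>d n\<bar>)"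
  define S where "S = (\<Sum>n. d n)"
  define Q where "Q = (\<Sum>n. (d n)\<^sup>2)"
  have dM: "\<bar>d n\<bar> \<le> M" for n unfolding M_def by (rule abs_le_sum_abs[OF sd])
  have M0: "0 \<le> M" using dM[of 0] by simp
  have sd': "summable d" using sd summable_rabs_cancel by blast
  have sq: "summable (\<lambda>n. (d n)\<^sup>2)"
  proof (rule summable_comparison_test[OF _ summable_mult[OF sd, of M]])
    have "(d n)\<^sup>2 \<le> M * \<bar>d n\<bar>" for n
    proof -
      have "(d n)\<^sup>2 = \<bar>d n\<bar> * \<bar>d n\<bar>" by (simp add: power2_eq_square)
      also have "\<dots> \<le> M * \<bar>d n\<bar>" by (rule mult_right_mono[OF dM]) simp
      finally show ?thesis .
    qed
    then show "\<exists>N. \<forall>n\<ge>N. norm ((d n)\<^sup>2) \<le> M * \<bar>d n\<bar>" by auto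
  qed
  have mpsi[measurable]: "\<psi> n \<in> borel_measurable L01" for n using meas_L01[OF meas] .
  have tb: "\<bar>d n * \<psi> n x\<bar> \<le> \<bar>d n\<bar>" if "x \<in> {0..1}" for n x
    using bnd[OF that, of n] by (auto simp: abs_mult intro: mult_left_le)
  have sx: "summable (\<lambda>n. \<bar>d n * \<psi> n x\<bar>)" if "x \<in> {0..1}" for x
    by (rule summable_comparison_test[OF _ sd]) (use tb[OF that] in auto)
  have sxa: "summable (\<lambda>n. \<bar>d n * \<psi> n x\<bar>)" for x
    by (rule summable_comparison_test[OF _ sd]) (use tb[of x] bnd0 in \<open>auto simp: abs_mult intro!: exI[of _ 0] mult_left_le\<close>)
  have gb: "\<bar>g x\<bar> \<le> M" if "x \<in> {0..1}" for x
  proof -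
    have "\<bar>g x\<bar> \<le> (\<Sum>n. \<bar>d n * \<psi> n x\<bar>)" unfolding g
      using summable_rabs[OF sx[OF that]] .
    also have "\<dots> \<le> M" unfolding M_def
      by (rule suminf_le[OF _ sx[OF that] sd]) (use tb[OF that] in auto)
    finally show ?thesis .
  qed
  have int_t: "integrable L01 (\<lambda>x. d n * \<psi> n x)" for n
    by (rule integrable_L01[of _ "\<bar>d n\<bar>"]) (use tb in auto)
  have int_abs: "integral\<^sup>L L01 (\<lambda>x. norm (d n * \<psi> n x)) = \<bar>d n\<bar> / 2" for n
  proof -
    have "integral\<^sup>L L01 (\<lambda>x. norm (d n * \<psi> n x)) = integral\<^sup>L L01 (\<lambda>x. \<bar>d n\<bar> * \<psi> n x)"
      by (rule Bochner_Integration.integral_cong[OF refl]) (use bnd in \<open>auto simp: abs_mult\<close>)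
    also have "\<dots> = \<bar>d n\<bar> / 2" using m1[of n] by simp
    finally show ?thesis .
  qed
  have sums1: "summable (\<lambda>n. integral\<^sup>L L01 (\<lambda>x. norm (d n * \<psi> n x)))"
    unfolding int_abs using summable_divide[OF sd, of 2] by simp
  have AE1: "AE x in L01. summable (\<lambda>n. norm (d n * \<psi> n x))"
    by (rule AE_I2) (use sx in auto)
  show intg: "integrable L01 g"
    unfolding g[abs_def] by (rule integrable_suminf[OF int_t AE1 sums1])
  have "integral\<^sup>L L01 g = (\<Sum>n. integral\<^sup>L L01 (\<lambda>x. d n * \<psi> n x))"
    unfolding g[abs_def] by (rule integral_suminf[OF int_t AE1 sums1])
  also have "\<dots> = (\<Sum>n. d n / 2)" by (simp add: m1)
  also have "\<dots> = S / 2" unfolding S_def by (rule suminf_divide[OF sd'])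
  finally show "integral\<^sup>L L01 g = (\<Sum>n. d n) / 2" unfolding S_def .
  have gmeas[measurable]: "g \<in> borel_measurable L01" using intg by (rule borel_measurable_integrable)
  have pg: "integrable L01 (\<lambda>x. \<psi> n x * g x) \<and> integral\<^sup>L L01 (\<lambda>x. \<psi> n x * g x) = S / 4 + d n / 12" for n
  proof -
    have tb2: "\<bar>\<psi> n x * (d i * \<psi> i x)\<bar> \<le> \<bar>d i\<bar>" if "x \<in> {0..1}" for i x
    proof -
      have "\<bar>\<psi> n x * (d i * \<psi> i x)\<bar> = \<psi> n x * \<bar>d i * \<psi> i x\<bar>"
        using bnd[OF that, of n] by (simp add: abs_mult)
      also have "\<dots> \<le> \<bar>d i * \<psi> i x\<bar>"
        by (rule mult_left_le_one_le) (use bnd[OF that, of n] in auto)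
      finally show ?thesis using tb[OF that, of i] by linarith
    qed
    have it: "integrable L01 (\<lambda>x. \<psi> n x * (d i * \<psi> i x))" for i
      by (rule integrable_L01[of _ "\<bar>d i\<bar>"]) (use tb2 in auto)
    have ia: "integral\<^sup>L L01 (\<lambda>x. norm (\<psi> n x * (d i * \<psi> i x))) \<le> \<bar>d i\<bar>" for i
    proof -
      have "integral\<^sup>L L01 (\<lambda>x. norm (\<psi> n x * (d i * \<psi> i x))) \<le> integral\<^sup>L L01 (\<lambda>x. \<bar>d i\<bar>)"
        by (rule integral_mono) (use it tb2 in \<open>auto intro: finite_measure.integrable_const[OF finite_L01]\<close>)
      then show ?thesis by (simp add: int_const_L01 measure_L01)
    qed
    have s2: "summable (\<lambda>i. integral\<^sup>L L01 (\<lambda>x. norm (\<psi> n x * (d i * \<psi> i x))))"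
      by (rule summable_comparison_test[OF _ sd]) (use ia in auto)
    have AE2: "AE x in L01. summable (\<lambda>i. norm (\<psi> n x * (d i * \<psi> i x)))"
      by (rule AE_I2, rule summable_comparison_test[OF _ sd]) (use tb2 in auto)
    have eq: "\<psi> n x * g x = (\<Sum>i. \<psi> n x * (d i * \<psi> i x))" for x
      unfolding g by (rule suminf_mult[symmetric]) (rule summable_rabs_cancel, rule sxa)
    have eqf: "(\<lambda>x. \<psi> n x * g x) = (\<lambda>x. \<Sum>i. \<psi> n x * (d i * \<psi> i x))"
      using eq by auto
    have I1: "integrable L01 (\<lambda>x. \<psi> n x * g x)"
      unfolding eqf by (rule integrable_suminf[OF it AE2 s2])
    have "integral\<^sup>L L01 (\<lambda>x. \<psi> n x * g x) = (\<Sum>i. integral\<^sup>L L01 (\<lambda>x. \<psi> n x * (d i * \<psi> i x)))"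
      unfolding eqf by (rule integral_suminf[OF it AE2 s2])
    also have "\<dots> = (\<Sum>i. d i / 4 + (if i = n then d i / 12 else 0))"
    proof (rule suminf_cong)
      fix i
      have "integral\<^sup>L L01 (\<lambda>x. \<psi> n x * (d i * \<psi> i x)) = integral\<^sup>L L01 (\<lambda>x. d i * (\<psi> n x * \<psi> i x))"
        by (simp add: algebra_simps)
      also have "\<dots> = d i * (if n = i then 1/3 else 1/4)" using m2[of n i] by simp
      also have "\<dots> = d i / 4 + (if i = n then d i / 12 else 0)" by auto
      finally show "integral\<^sup>L L01 (\<lambda>x. \<psi> n x * (d i * \<psi> i x)) = d i / 4 + (if i = n then d i / 12 else 0)" .
    qed
    also have "\<dots> = (\<Sum>i. d i / 4) + (\<Sum>i. (if i = n then d i / 12 else 0))"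
      by (rule suminf_add[symmetric]) (use summable_divide[OF sd'] sums_single[of n "\<lambda>i. d i / 12"] sums_summable in auto)
    also have "\<dots> = S / 4 + d n / 12"
      using suminf_divide[OF sd', of 4] sums_unique[OF sums_single[of n "\<lambda>i. d i / 12"]]
      unfolding S_def by simp
    finally show ?thesis using I1 by simp
  qed
  have tb3: "\<bar>d n * (\<psi> n x * g x)\<bar> \<le> \<bar>d n\<bar> * M" if "x \<in> {0..1}" for n x
  proof -
    have "\<bar>\<psi> n x * g x\<bar> \<le> M"
      using bnd[OF that, of n] gb[OF that] M0 by (auto simp: abs_mult intro: mult_le_one order_trans[OF mult_left_le_one_le])
    then show ?thesis by (simp add: abs_mult mult_left_mono)
  qed
  have it3: "integrable L01 (\<lambda>x. d n * (\<psi> n x * g x))" for n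
    using pg[of n] by simp
  have ia3: "integral\<^sup>L L01 (\<lambda>x. norm (d n * (\<psi> n x * g x))) \<le> \<bar>d n\<bar> * M" for n
  proof -
    have "integral\<^sup>L L01 (\<lambda>x. norm (d n * (\<psi> n x * g x))) \<le> integral\<^sup>L L01 (\<lambda>x. \<bar>d n\<bar> * M)"
      by (rule integral_mono) (use it3 tb3 in \<open>auto intro: finite_measure.integrable_const[OF finite_L01]\<close>)
    then show ?thesis by (simp add: int_const_L01 measure_L01)
  qed
  have sdM: "summable (\<lambda>n. \<bar>d n\<bar> * M)" using summable_mult2[OF sd] .
  have s3: "summable (\<lambda>n. integral\<^sup>L L01 (\<lambda>x. norm (d n * (\<psi> n x * g x))))"
    by (rule summable_comparison_test[OF _ sdM]) (use ia3 in auto)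
  have AE3: "AE x in L01. summable (\<lambda>n. norm (d n * (\<psi> n x * g x)))"
    by (rule AE_I2, rule summable_comparison_test[OF _ sdM]) (use tb3 in auto)
  have eq3: "(\<lambda>x. (g x)\<^sup>2) = (\<lambda>x. \<Sum>n. d n * (\<psi> n x * g x))"
  proof
    fix x
    have "(g x)\<^sup>2 = (\<Sum>n. d n * \<psi> n x) * g x" by (simp add: power2_eq_square g)
    also have "\<dots> = (\<Sum>n. d n * \<psi> n x * g x)"
      by (rule suminf_mult2) (rule summable_rabs_cancel, rule sxa)
    finally show "(g x)\<^sup>2 = (\<Sum>n. d n * (\<psi> n x * g x))" by (simp add: mult.assoc)
  qed
  show "integrable L01 (\<lambda>x. (g x)\<^sup>2)"
    unfolding eq3 by (rule integrable_suminf[OF it3 AE3 s3])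
  have "integral\<^sup>L L01 (\<lambda>x. (g x)\<^sup>2) = (\<Sum>n. integral\<^sup>L L01 (\<lambda>x. d n * (\<psi> n x * g x)))"
    unfolding eq3 by (rule integral_suminf[OF it3 AE3 s3])
  also have "\<dots> = (\<Sum>n. S / 4 * d n + (d n)\<^sup>2 / 12)"
    using pg by (simp add: algebra_simps power2_eq_square)
  also have "\<dots> = (\<Sum>n. S / 4 * d n) + (\<Sum>n. (d n)\<^sup>2 / 12)"
    by (rule suminf_add[symmetric]) (use summable_mult[OF sd'] summable_divide[OF sq] in auto)
  also have "\<dots> = S / 4 * S + Q / 12"
    using suminf_mult[OF sd', of "S/4"] suminf_divide[OF sq, of 12] unfolding S_def Q_def by simp
  finally show "integral\<^sup>L L01 (\<lambda>x. (g x)\<^sup>2) = (\<Sum>n. d n)\<^sup>2 / 4 + (\<Sum>n. (d n)\<^sup>2) / 12"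
    unfolding S_def Q_def by (simp add: power2_eq_square)
qed



lemma key:
  fixes g :: "real \<Rightarrow> real" and S Q :: real
  assumes ig: "integrable L01 g" and eg: "integral\<^sup>L L01 g = S / 2"
    and ig2: "integrable L01 (\<lambda>x. (g x)\<^sup>2)" and eg2: "integral\<^sup>L L01 (\<lambda>x. (g x)\<^sup>2) = S\<^sup>2 / 4 + Q / 12"
    and S: "S \<noteq> 0"
  shows "integral\<^sup>L L01 (\<lambda>x. (g x / ((1/2) * S) - 1)\<^sup>2) = Q / S\<^sup>2 / 3"
    "\<And>\<epsilon>. \<epsilon> > 0 \<Longrightarrow> 1 - (Q / S\<^sup>2 / 3) / \<epsilon>\<^sup>2 \<le> measure L01 {x \<in> {0..1}. 1 - \<epsilon> \<le> g x / ((1/2) * S) \<and> g x / ((1/2) * S) \<le> 1 + \<epsilon>}"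
proof -
  have gm[measurable]: "g \<in> borel_measurable L01" using ig by (rule borel_measurable_integrable)
  have eqf: "(\<lambda>x. (g x / ((1/2) * S) - 1)\<^sup>2) = (\<lambda>x. (4 / S\<^sup>2) * (g x)\<^sup>2 + ((- 4 / S) * g x + 1))"
    using S by (auto simp: fun_eq_iff field_simps power2_eq_square)
  have i1: "integrable L01 (\<lambda>x. (4 / S\<^sup>2) * (g x)\<^sup>2)" using ig2 by simp
  have i2: "integrable L01 (\<lambda>x. (- 4 / S) * g x + 1)"
    using ig by (intro Bochner_Integration.integrable_add) (auto intro: finite_measure.integrable_const[OF finite_L01])
  have I: "integrable L01 (\<lambda>x. (g x / ((1/2) * S) - 1)\<^sup>2)"
    unfolding eqf using i1 i2 by (rule Bochner_Integration.integrable_add)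
  have "integral\<^sup>L L01 (\<lambda>x. (g x / ((1/2) * S) - 1)\<^sup>2)
      = (4 / S\<^sup>2) * integral\<^sup>L L01 (\<lambda>x. (g x)\<^sup>2) + ((- 4 / S) * integral\<^sup>L L01 g + 1)"
    unfolding eqf
    using i1 i2 ig by (simp add: Bochner_Integration.integral_add int_const_L01 measure_L01
        finite_measure.integrable_const[OF finite_L01])
  also have "\<dots> = Q / S\<^sup>2 / 3" unfolding eg eg2 using S by (simp add: field_simps power2_eq_square)
  finally show V: "integral\<^sup>L L01 (\<lambda>x. (g x / ((1/2) * S) - 1)\<^sup>2) = Q / S\<^sup>2 / 3" .
  fix \<epsilon> :: real assume e: "\<epsilon> > 0"
  define h where "h x = g x / ((1/2) * S) - 1" for x
  have hm[measurable]: "h \<in> borel_measurable L01" unfolding h_def by measurable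
  define X where "X = {x \<in> {0..1}. 1 - \<epsilon> \<le> g x / ((1/2) * S) \<and> g x / ((1/2) * S) \<le> 1 + \<epsilon>}"
  have X: "X = {x \<in> space L01. \<bar>h x\<bar> \<le> \<epsilon>}" unfolding X_def h_def by auto
  have Xs: "X \<in> sets L01" unfolding X by measurable
  have Ys: "{x \<in> space L01. \<epsilon> \<le> \<bar>h x\<bar>} \<in> sets L01" by measurable
  have "measure L01 {x \<in> space L01. \<bar>h x\<bar> \<ge> \<epsilon>} \<le> integral\<^sup>L L01 (\<lambda>x. h x ^ 2) / \<epsilon>\<^sup>2"
    by (rule finite_measure.second_moment_method[OF finite_L01 hm _ e]) (use I in \<open>simp add: h_def\<close>)
  also have "integral\<^sup>L L01 (\<lambda>x. h x ^ 2) = Q / S\<^sup>2 / 3" using V by (simp add: h_def)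
  finally have m1: "measure L01 {x \<in> space L01. \<bar>h x\<bar> \<ge> \<epsilon>} \<le> (Q / S\<^sup>2 / 3) / \<epsilon>\<^sup>2" .
  have "measure L01 (space L01 - X) \<le> measure L01 {x \<in> space L01. \<bar>h x\<bar> \<ge> \<epsilon>}"
    by (rule finite_measure.finite_measure_mono[OF finite_L01 _ Ys]) (auto simp: X)
  moreover have "measure L01 (space L01 - X) = 1 - measure L01 X"
    using finite_measure.finite_measure_compl[OF finite_L01 Xs] measure_L01 by simp
  ultimately show "1 - (Q / S\<^sup>2 / 3) / \<epsilon>\<^sup>2 \<le> measure L01 {x \<in> {0..1}. 1 - \<epsilon> \<le> g x / ((1/2) * S) \<and> g x / ((1/2) * S) \<le> 1 + \<epsilon>}"
    using m1 unfolding X_def by linarith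
qed



theorem theorem1p1:
  fixes c :: "nat \<Rightarrow> real" and f :: "real \<Rightarrow> real" and fN :: "nat \<Rightarrow> real \<Rightarrow> real"
  assumes abs_summable: "summable (\<lambda>n. \<bar>c (n + 1)\<bar>)"
    and sq_pos: "\<And>N. N \<ge> 1 \<Longrightarrow> (\<Sum>n. (c (n + N))\<^sup>2) > 0"
    and tail_nz: "\<And>N. N \<ge> 1 \<Longrightarrow> (\<Sum>n. c (n + N)) \<noteq> 0"
    and f_def: "\<And>x. f x = (\<Sum>n. c (n + 1) * tent_iter (n + 1) x)"
    and fN_def: "\<And>N x. fN N x = (\<Sum>n = 1..<N. c n * tent_iter n x)"
  shows "(((\<lambda>N. integral\<^sup>L (lebesgue_on {0..1})
              (\<lambda>x. ((f x - fN N x) / ((1/2) * (\<Sum>n. c (n + N))) - 1)\<^sup>2)) \<longlonglongrightarrow> 0)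
         \<longleftrightarrow> ((\<lambda>N. (\<Sum>n. (c (n + N))\<^sup>2) / (\<Sum>n. c (n + N))\<^sup>2) \<longlonglongrightarrow> 0))
    \<and> (((\<lambda>N. (\<Sum>n. (c (n + N))\<^sup>2) / (\<Sum>n. c (n + N))\<^sup>2) \<longlonglongrightarrow> 0) \<longrightarrow>
         (\<forall>\<epsilon>::real. \<epsilon> > 0 \<longrightarrow> ((\<lambda>N. measure (lebesgue_on {0..1})
              {x \<in> {0..1}. 1 - \<epsilon> \<le> (f x - fN N x) / ((1/2) * (\<Sum>n. c (n + N)))
                          \<and> (f x - fN N x) / ((1/2) * (\<Sum>n. c (n + N))) \<le> 1 + \<epsilon>}) \<longlonglongrightarrow> 1)))"
proof -
  define S where "S N = (\<Sum>n. c (n + N))" for N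
  define Q where "Q N = (\<Sum>n. (c (n + N))\<^sup>2)" for N
  define A where "A N = Q N / (S N)\<^sup>2" for N
  define V where "V N = integral\<^sup>L (lebesgue_on {0..1})
              (\<lambda>x. ((f x - fN N x) / ((1/2) * (\<Sum>n. c (n + N))) - 1)\<^sup>2)" for N
  define P where "P \<epsilon> N = measure (lebesgue_on {0..1})
              {x \<in> {0..1}. 1 - \<epsilon> \<le> (f x - fN N x) / ((1/2) * (\<Sum>n. c (n + N)))
                          \<and> (f x - fN N x) / ((1/2) * (\<Sum>n. c (n + N))) \<le> 1 + \<epsilon>}" for \<epsilon> N
  have main: "V N = A N / 3 \<and> (\<forall>\<epsilon>>0. 1 - (A N / 3) / \<epsilon>\<^sup>2 \<le> P \<epsilon> N)" if N: "N \<ge> 1" for N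
  proof -
    have sd: "summable (\<lambda>n. \<bar>c (n + N)\<bar>)"
    proof -
      have "summable (\<lambda>n. \<bar>c (n + (N - 1) + 1)\<bar>)"
        using summable_iff_shift[of "\<lambda>n. \<bar>c (n + 1)\<bar>" "N - 1"] abs_summable by simp
      moreover have "\<And>n. n + (N - 1) + 1 = n + N" using N by simp
      ultimately show ?thesis by simp
    qed
    have gx: "f x - fN N x = (\<Sum>n. c (n + N) * tent_iter (n + N) x)" for x
    proof -
      let ?a = "\<lambda>n. c (n + 1) * tent_iter (n + 1) x"
      have sa: "summable ?a"
      proof (rule summable_comparison_test[OF _ abs_summable])
        show "\<exists>N. \<forall>n\<ge>N. norm (?a n) \<le> \<bar>c (n + 1)\<bar>"
          using tent_iter_bounds[of "_ + 1" x] by (auto simp: abs_mult intro!: mult_left_le)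
      qed
      have "f x = (\<Sum>n. ?a (n + (N - 1))) + (\<Sum>i<N - 1. ?a i)"
        unfolding f_def by (rule suminf_split_initial_segment[OF sa])
      moreover have "(\<Sum>n. ?a (n + (N - 1))) = (\<Sum>n. c (n + N) * tent_iter (n + N) x)"
        using N by (intro suminf_cong) (simp add: algebra_simps)
      moreover have "(\<Sum>i<N - 1. ?a i) = fN N x"
      proof -
        have "fN N x = (\<Sum>n = Suc 0..<Suc (N - 1). c n * tent_iter n x)" unfolding fN_def using N by simp
        also have "\<dots> = (\<Sum>i = 0..<N - 1. ?a i)" by (subst sum.shift_bounds_Suc_ivl) simp
        finally show ?thesis by (simp add: atLeast0LessThan)
      qed
      ultimately show ?thesis by simp
    qed
    note SM = series_moments[of "\<lambda>n. c (n + N)" "\<lambda>n. tent_iter (n + N)" "\<lambda>x. f x - fN N x", OF sd tent_iter_meas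
       _ mom1 _ gx]
    have b0: "0 \<le> tent_iter (n + N) x \<and> tent_iter (n + N) x \<le> 1" for n x using N tent_iter_bounds by simp
    have m2: "integral\<^sup>L L01 (\<lambda>x. tent_iter (m + N) x * tent_iter (n + N) x) = (if m = n then 1/3 else 1/4)" for m n
      by (simp add: mom2)
    note SM = SM[OF b0 m2]
    note K = key[of "\<lambda>x. f x - fN N x" "S N" "Q N", OF SM(1) SM(2)[folded S_def] SM(3) SM(4)[folded S_def Q_def] tail_nz[OF N, folded S_def]]
    show ?thesis using K unfolding V_def P_def A_def S_def by auto
  qed
  have ev: "eventually (\<lambda>N. V N = A N / 3) sequentially"
    using main unfolding eventually_sequentially by blast
  have p1: "(V \<longlonglongrightarrow> 0) \<longleftrightarrow> (A \<longlonglongrightarrow> 0)"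
  proof -
    have "(V \<longlonglongrightarrow> 0) \<longleftrightarrow> ((\<lambda>N. A N / 3) \<longlonglongrightarrow> 0)" by (rule tendsto_cong[OF ev])
    also have "\<dots> \<longleftrightarrow> (A \<longlonglongrightarrow> 0)"
    proof
      assume "(\<lambda>N. A N / 3) \<longlonglongrightarrow> 0"
      then have "(\<lambda>N. 3 * (A N / 3)) \<longlonglongrightarrow> 0" by (rule tendsto_mult_right_zero)
      then show "A \<longlonglongrightarrow> 0" by simp
    next
      assume "A \<longlonglongrightarrow> 0"
      then show "(\<lambda>N. A N / 3) \<longlonglongrightarrow> 0" by (rule tendsto_divide_zero)
    qed
    finally show ?thesis .
  qed
  have p2: "\<forall>\<epsilon>::real. \<epsilon> > 0 \<longrightarrow> (P \<epsilon> \<longlonglongrightarrow> 1)" if A0: "A \<longlonglongrightarrow> 0"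
  proof (intro allI impI)
    fix \<epsilon> :: real assume e: "\<epsilon> > 0"
    show "P \<epsilon> \<longlonglongrightarrow> 1"
    proof (rule tendsto_sandwich[of "\<lambda>N. 1 - (A N / 3) / \<epsilon>\<^sup>2" _ _ "\<lambda>N. 1"])
      show "eventually (\<lambda>N. 1 - (A N / 3) / \<epsilon>\<^sup>2 \<le> P \<epsilon> N) sequentially"
        using main e unfolding eventually_sequentially by blast
      have "P \<epsilon> N \<le> 1" for N
        unfolding P_def using finite_measure.bounded_measure[OF finite_L01] measure_L01 by simp
      then show "eventually (\<lambda>N. P \<epsilon> N \<le> 1) sequentially" by simp
      have "(\<lambda>N. 1 - (A N / 3) / \<epsilon>\<^sup>2) \<longlonglongrightarrow> 1 - 0"
        by (intro tendsto_diff tendsto_const tendsto_divide_zero A0)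
      then show "(\<lambda>N. 1 - (A N / 3) / \<epsilon>\<^sup>2) \<longlonglongrightarrow> 1" by simp
    qed simp
  qed
  show ?thesis using p1 p2 unfolding V_def[abs_def] P_def[abs_def] A_def[abs_def] S_def Q_def by blast
qed


end
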